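(* There exist absolute positive constants $c,C$ such that the following holds. Let $n>10$ be an integer, $0<p<1/2$, and let $\varepsilon_1,\dots,\varepsilon_n$ be i.i.d. Bernoulli$(p)$ random variables, extended periodically by $\varepsilon_{j+n}=\varepsilon_j$. For integers $i$ let $X_i=\varepsilon_i\varepsilon_{i+1}$ (so $X_{i+n}=X_i$), and $W=\sum_{i=1}^nX_i$. Then for every positive integer $w\le cnp$ with $P(W=w)>0$, $$\sum_{i=1}^n\sum_{j\in\{i-1,i+1\}}E(X_iX_j\mid W=w)\le \frac{C}{np}\,w^2 .$$ *)

theory Defs
  imports "HOL-Probability.Probability"
begin

definition eps_pmf :: "nat \<Rightarrow> real \<Rightarrow> (int \<Rightarrow> bool) pmf" where
  "eps_pmf n p = Pi_pmf {1..int n} False (\<lambda>_. bernoulli_pmf p)"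

definition epsv :: "nat \<Rightarrow> (int \<Rightarrow> bool) \<Rightarrow> int \<Rightarrow> real" where
  "epsv n e i = (if e ((i - 1) mod int n + 1) then 1 else 0)"

definition Xv :: "nat \<Rightarrow> (int \<Rightarrow> bool) \<Rightarrow> int \<Rightarrow> real" where
  "Xv n e i = epsv n e i * epsv n e (i + 1)"

definition Wv :: "nat \<Rightarrow> (int \<Rightarrow> bool) \<Rightarrow> real" where
  "Wv n e = (\<Sum>i\<in>{1..int n}. Xv n e i)"

end

theory Submission
  imports Defs
begin

definition idx :: "nat \<Rightarrow> int \<Rightarrow> int" where
  "idx n i = (i - 1) mod int n + 1"

lemma idx_in: "n > 0 \<Longrightarrow> idx n i \<in> {1..int n}"
proof -
  assume n: "n > 0"
  have "(i-1) mod int n < int n" "0 \<le> (i-1) mod int n" using n by simp_all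
  then show ?thesis unfolding idx_def by simp
qed

lemma idx_id: "i \<in> {1..int n} \<Longrightarrow> idx n i = i"
  unfolding idx_def by (auto simp: mod_pos_pos_trivial)

lemma idx_idx_add: "idx n (idx n x + a) = idx n (x + a)"
proof -
  have "((x-1) mod int n + 1 + a - 1) mod int n = ((x-1) mod int n + a) mod int n" by simp
  also have "\<dots> = (x - 1 + a) mod int n" by (rule mod_add_left_eq)
  finally show ?thesis unfolding idx_def by (simp add: algebra_simps)
qed

lemma idx_period: "idx n (x + int n) = idx n x"
proof -
  have "x + int n - 1 = (x - 1) + int n" by simp
  then show ?thesis unfolding idx_def by (simp only: mod_add_self2)
qed

lemma idx_eq_iff: "idx n x = idx n y \<longleftrightarrow> x mod int n = y mod int n"
  unfolding idx_def
  by (simp add: mod_eq_dvd_iff)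

lemma idx_neq:
  assumes "0 < \<bar>a - b\<bar>" "\<bar>a - b\<bar> < int n"
  shows "idx n (j + a) \<noteq> idx n (j + b)"
proof
  assume "idx n (j + a) = idx n (j + b)"
  hence "(j + a) mod int n = (j + b) mod int n" by (simp add: idx_eq_iff)
  hence "int n dvd (a - b)"
    by (simp add: mod_eq_dvd_iff)
  then obtain k where "a - b = int n * k" by auto
  show False
  proof (cases "k = 0")
    case True then show False using assms \<open>a - b = int n * k\<close> by simp
  next
    case False
    then have "1 \<le> \<bar>k\<bar>" by simp
    then have "int n * 1 \<le> int n * \<bar>k\<bar>" by (intro mult_left_mono) auto
    moreover have "\<bar>a - b\<bar> = int n * \<bar>k\<bar>" using \<open>a - b = int n * k\<close> by (simp add: abs_mult)
    ultimately show False using assms by linarith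
  qed
qed

lemma epsv_idx: "epsv n e x = (if e (idx n x) then 1 else 0)"
  unfolding epsv_def idx_def by simp

lemma epsv_idx_add: "epsv n e (idx n x + a) = epsv n e (x + a)"
  by (simp add: epsv_idx idx_idx_add)

lemma epsv_idx0: "epsv n e (idx n x) = epsv n e x"
  using epsv_idx_add[of n e x 0] by simp

lemma epsv_period: "epsv n e (x + int n) = epsv n e x"
  by (simp add: epsv_idx idx_period)

lemma epsv01: "epsv n e x = 0 \<or> epsv n e x = 1"
  by (simp add: epsv_idx)

lemma epsv_sq: "epsv n e x * epsv n e x = epsv n e x"
  by (simp add: epsv_idx)

lemma epsv_upd: "epsv n (e(m := b)) x = (if idx n x = m then (if b then 1 else 0) else epsv n e x)"
  by (simp add: epsv_idx)

lemma periodic_idx: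
  assumes per: "\<And>i. f (i + int n) = f i" and n: "n > 0"
  shows "f (idx n x) = f x"
proof -
  have gen: "f (y + int n * k) = f y" for y k
  proof (induction k rule: int_induct[where k=0])
    case base then show ?case by simp
  next
    case (step1 i)
    have "f (y + int n * (i + 1)) = f (y + int n * i + int n)" by (simp add: algebra_simps)
    then show ?case using per step1 by simp
  next
    case (step2 i)
    have "f (y + int n * i) = f (y + int n * (i - 1) + int n)" by (simp add: algebra_simps)
    then show ?case using per step2 by simp
  qed
  have xe: "idx n x + int n * ((x - 1) div int n) = x"
    using mult_div_mod_eq[of "int n" "x-1"] unfolding idx_def by linarith
  show ?thesis using gen[of "idx n x" "(x - 1) div int n"] unfolding xe by simp
qed

lemma sum_shift:
  fixes f :: "int \<Rightarrow> real"
  assumes per: "\<And>i. f (i + int n) = f i" and n: "n > 0"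
  shows "(\<Sum>i\<in>{1..int n}. f (i + a)) = (\<Sum>i\<in>{1..int n}. f i)"
proof -
  have "(\<Sum>i\<in>{1..int n}. f (i + a)) = (\<Sum>i\<in>{1..int n}. f (idx n (i + a)))"
    using periodic_idx[where f=f and n=n, OF per n] by simp
  also have "\<dots> = (\<Sum>i\<in>{1..int n}. f i)"
  proof (rule sum.reindex_bij_witness[where i = "\<lambda>j. idx n (j - a)" and j = "\<lambda>i. idx n (i + a)"])
    fix i assume "i \<in> {1..int n}"
    then show "idx n (idx n (i + a) - a) = i"
      using idx_idx_add[of n "i+a" "-a"] idx_id[of i n] by simp
  next
    fix i assume "i \<in> {1..int n}"
    then show "idx n (i + a) \<in> {1..int n}" using idx_in n by auto
  next
    fix j assume "j \<in> {1..int n}"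
    then show "idx n (idx n (j - a) + a) = j"
      using idx_idx_add[of n "j-a" "a"] idx_id[of j n] by simp
  next
    fix j assume "j \<in> {1..int n}"
    then show "idx n (j - a) \<in> {1..int n}" using idx_in n by auto
  qed simp
  finally show ?thesis .
qed

lemma sum_delta:
  fixes h :: "int \<Rightarrow> real"
  assumes per: "\<And>i. h (i + int n) = h i" and n: "n > 0" and m: "m \<in> {1..int n}"
  shows "(\<Sum>i\<in>{1..int n}. (if idx n (i + a) = m then h i else 0)) = h (m - a)"
proof -
  define F where "F j = (if idx n j = m then h (j - a) else 0)" for j
  have perF: "F (j + int n) = F j" for j
    unfolding F_def using per[of "j - a"] by (simp add: idx_period algebra_simps)
  have "(\<Sum>i\<in>{1..int n}. (if idx n (i + a) = m then h i else 0)) = (\<Sum>i\<in>{1..int n}. F (i + a))"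
    unfolding F_def by (rule sum.cong) auto
  also have "\<dots> = (\<Sum>i\<in>{1..int n}. F i)" by (rule sum_shift[where f=F and n=n, OF perF n])
  also have "\<dots> = (\<Sum>i\<in>{1..int n}. (if i = m then h (m - a) else 0))"
    by (rule sum.cong) (auto simp: F_def idx_id)
  also have "\<dots> = h (m - a)" using m by simp
  finally show ?thesis .
qed

definition SS :: "nat \<Rightarrow> (int \<Rightarrow> bool) set" where
  "SS n = {e. \<forall>x. x \<notin> {1..int n} \<longrightarrow> e x = False}"

definition EE :: "nat \<Rightarrow> real \<Rightarrow> ((int \<Rightarrow> bool) \<Rightarrow> real) \<Rightarrow> real" where
  "EE n p f = (\<Sum>e\<in>SS n. pmf (eps_pmf n p) e * f e)"

lemma SS_eq: "SS n = PiE_dflt {1..int n} False (\<lambda>_. UNIV)"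
  unfolding SS_def PiE_dflt_def by auto

lemma finite_SS: "finite (SS n)"
  unfolding SS_eq by (intro finite_PiE_dflt) auto

lemma set_eps_pmf: "set_pmf (eps_pmf n p) \<subseteq> SS n"
  unfolding eps_pmf_def SS_def using set_Pi_pmf_subset[of "{1..int n}" False] by auto

lemma expectation_EE: "measure_pmf.expectation (eps_pmf n p) f = EE n p f"
  unfolding EE_def
  by (subst integral_measure_pmf_real[of "SS n"])
     (use finite_SS set_eps_pmf in \<open>auto simp: mult.commute\<close>)

lemma pmf_eps: "e \<in> SS n \<Longrightarrow> pmf (eps_pmf n p) e = (\<Prod>x\<in>{1..int n}. pmf (bernoulli_pmf p) (e x))"
  unfolding eps_pmf_def SS_def by (subst pmf_Pi') auto

lemma pmf_eps_nonneg: "pmf (eps_pmf n p) e \<ge> 0" by simp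

lemma EE_add: "EE n p (\<lambda>e. f e + g e) = EE n p f + EE n p g"
  unfolding EE_def by (simp add: distrib_left sum.distrib)

lemma EE_diff: "EE n p (\<lambda>e. f e - g e) = EE n p f - EE n p g"
  unfolding EE_def by (simp add: right_diff_distrib sum_subtractf)

lemma EE_cmult: "EE n p (\<lambda>e. c * f e) = c * EE n p f"
  unfolding EE_def by (simp add: sum_distrib_left algebra_simps)

lemma EE_sum: "finite I \<Longrightarrow> EE n p (\<lambda>e. \<Sum>i\<in>I. f i e) = (\<Sum>i\<in>I. EE n p (f i))"
  unfolding EE_def by (simp add: sum_distrib_left sum.swap[of _ I])

lemma EE_mono: "(\<And>e. e \<in> SS n \<Longrightarrow> f e \<le> g e) \<Longrightarrow> EE n p f \<le> EE n p g"
  unfolding EE_def by (intro sum_mono mult_left_mono) auto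

lemma EE_cong: "(\<And>e. e \<in> SS n \<Longrightarrow> f e = g e) \<Longrightarrow> EE n p f = EE n p g"
  unfolding EE_def by (intro sum.cong) auto

lemma EE_nonneg: "(\<And>e. e \<in> SS n \<Longrightarrow> 0 \<le> f e) \<Longrightarrow> 0 \<le> EE n p f"
  unfolding EE_def by (intro sum_nonneg mult_nonneg_nonneg) auto

lemma upd_SS: "e \<in> SS n \<Longrightarrow> m \<in> {1..int n} \<Longrightarrow> e(m := b) \<in> SS n"
  unfolding SS_def by auto

lemma pmf_upd:
  assumes e: "e \<in> SS n" and m: "m \<in> {1..int n}" and em: "\<not> e m" and p: "0 \<le> p" "p \<le> 1"
  shows "(1 - p) * pmf (eps_pmf n p) (e(m := True)) = p * pmf (eps_pmf n p) e"
proof -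
  let ?A = "{1..int n}"
  let ?Q = "(\<Prod>x\<in>?A - {m}. pmf (bernoulli_pmf p) (e x))"
  have fin: "finite ?A" by simp
  have q: "(\<Prod>x\<in>?A - {m}. pmf (bernoulli_pmf p) ((e(m := True)) x)) = ?Q"
    by (rule prod.cong) auto
  have "pmf (eps_pmf n p) (e(m := True)) = pmf (bernoulli_pmf p) ((e(m := True)) m) * (\<Prod>x\<in>?A - {m}. pmf (bernoulli_pmf p) ((e(m := True)) x))"
    by (simp only: pmf_eps[OF upd_SS[OF e m]] prod.remove[OF fin m])
  also have "\<dots> = p * ?Q" using p q by simp
  finally have 1: "pmf (eps_pmf n p) (e(m := True)) = p * ?Q" .
  have "pmf (eps_pmf n p) e = pmf (bernoulli_pmf p) (e m) * ?Q"
    by (simp only: pmf_eps[OF e] prod.remove[OF fin m])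
  also have "\<dots> = (1 - p) * ?Q" using p em by simp
  finally have 2: "pmf (eps_pmf n p) e = (1 - p) * ?Q" .
  show ?thesis unfolding 1 2 by simp
qed

lemma toggle:
  assumes m: "m \<in> {1..int n}" and p: "0 < p" "p < 1"
  shows "EE n p (\<lambda>e. g e * epsv n e m) = p / (1 - p) * EE n p (\<lambda>e. g (e(m := True)) * (1 - epsv n e m))"
proof -
  let ?P = "pmf (eps_pmf n p)"
  let ?S0 = "{e \<in> SS n. \<not> e m}" and ?S1 = "{e \<in> SS n. e m}"
  have em: "epsv n e m = (if e m then 1 else 0)" for e using idx_id[OF m] by (simp add: epsv_idx)
  have "EE n p (\<lambda>e. g e * epsv n e m) = (\<Sum>e\<in>?S1. ?P e * g e)"
    unfolding EE_def using finite_SS by (subst sum.inter_filter) (auto intro!: sum.cong simp: em)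
  also have "?S1 = (\<lambda>e. e(m := True)) ` ?S0"
  proof
    show "?S1 \<subseteq> (\<lambda>e. e(m := True)) ` ?S0"
    proof
      fix x assume x: "x \<in> ?S1"
      then have "x = (x(m := False))(m := True)" by (auto simp: fun_eq_iff)
      moreover have "x(m := False) \<in> ?S0" using x upd_SS[of x n m False] m by auto
      ultimately show "x \<in> (\<lambda>e. e(m := True)) ` ?S0" by blast
    qed
  qed (use upd_SS m in \<open>auto intro: fun_upd_idem[symmetric]\<close>)
  also have "(\<Sum>e\<in>(\<lambda>e. e(m := True)) ` ?S0. ?P e * g e) = (\<Sum>e\<in>?S0. ?P (e(m := True)) * g (e(m := True)))"
  proof (subst sum.reindex)
    show "inj_on (\<lambda>e. e(m := True)) ?S0"
    proof (rule inj_onI)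
      fix x y assume xy: "x \<in> ?S0" "y \<in> ?S0" and eq: "x(m := True) = y(m := True)"
      show "x = y"
      proof (rule ext)
        fix z show "x z = y z" using fun_cong[OF eq, of z] xy by (cases "z = m") auto
      qed
    qed
  qed simp
  also have "\<dots> = (\<Sum>e\<in>?S0. p / (1 - p) * (?P e * g (e(m := True))))"
  proof (rule sum.cong)
    fix e assume "e \<in> ?S0"
    then have "(1 - p) * ?P (e(m := True)) = p * ?P e" using pmf_upd[of e n m p] m p by auto
    then have "?P (e(m := True)) = p / (1 - p) * ?P e" using p by (simp add: field_simps)
    then show "?P (e(m := True)) * g (e(m := True)) = p / (1 - p) * (?P e * g (e(m := True)))" by simp
  qed simp
  also have "\<dots> = p / (1 - p) * EE n p (\<lambda>e. g (e(m := True)) * (1 - epsv n e m))"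
    unfolding EE_def sum_distrib_left using finite_SS by (subst sum.inter_filter) (auto intro!: sum.cong simp: em)
  finally show ?thesis .
qed

lemma W_upd:
  assumes n: "n \<ge> 3" and m: "m \<in> {1..int n}" and em: "\<not> e m"
  shows "Wv n (e(m := True)) = Wv n e + epsv n e (m - 1) + epsv n e (m + 1)"
proof -
  define d where "d j = (if idx n j = m then 1 else (0::real))" for j
  have np: "n > 0" using n by simp
  have ev': "epsv n (e(m := True)) j = epsv n e j + d j" for j
    using em by (auto simp: epsv_idx d_def)
  have "Wv n (e(m := True)) = (\<Sum>i\<in>{1..int n}. Xv n e i + d i * epsv n e (i + 1) + d (i + 1) * epsv n e i + d i * d (i + 1))"
    unfolding Wv_def Xv_def ev' by (intro sum.cong) (auto simp: algebra_simps)
  also have "\<dots> = Wv n e + (\<Sum>i\<in>{1..int n}. d i * epsv n e (i + 1)) + (\<Sum>i\<in>{1..int n}. d (i + 1) * epsv n e i) + (\<Sum>i\<in>{1..int n}. d i * d (i + 1))"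
    unfolding Wv_def by (simp add: sum.distrib)
  also have "(\<Sum>i\<in>{1..int n}. d i * epsv n e (i + 1)) = epsv n e (m + 1)"
  proof -
    have "(\<Sum>i\<in>{1..int n}. d i * epsv n e (i + 1)) = (\<Sum>i\<in>{1..int n}. if idx n (i + 0) = m then epsv n e (i + 1) else 0)"
      by (rule sum.cong) (auto simp: d_def)
    also have "\<dots> = epsv n e (m - 0 + 1)"
    proof (rule sum_delta[OF _ np m])
      fix i show "epsv n e (i + int n + 1) = epsv n e (i + 1)"
        using epsv_period[of n e "i+1"] by (simp add: algebra_simps)
    qed
    finally show ?thesis by simp
  qed
  also have "(\<Sum>i\<in>{1..int n}. d (i + 1) * epsv n e i) = epsv n e (m - 1)"
  proof -
    have "(\<Sum>i\<in>{1..int n}. d (i + 1) * epsv n e i) = (\<Sum>i\<in>{1..int n}. if idx n (i + 1) = m then epsv n e i else 0)"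
      by (rule sum.cong) (auto simp: d_def)
    also have "\<dots> = epsv n e (m - 1)"
      by (rule sum_delta[OF _ np m]) (rule epsv_period)
    finally show ?thesis .
  qed
  also have "(\<Sum>i\<in>{1..int n}. d i * d (i + 1)) = 0"
  proof (rule sum.neutral, rule ballI)
    fix i
    have "idx n (i + 0) \<noteq> idx n (i + 1)" by (rule idx_neq) (use n in auto)
    then show "d i * d (i + 1) = 0" unfolding d_def by auto
  qed
  finally show ?thesis unfolding fun_upd_def by linarith
qed

lemma ev_upd_other: "idx n y \<noteq> idx n x \<Longrightarrow> epsv n (e(idx n x := b)) y = epsv n e y"
  by (simp add: epsv_upd)

lemma ev_upd_same: "epsv n (e(idx n x := True)) x = 1"
  by (simp add: epsv_upd)

lemma ev_false: "epsv n e x = 0 \<Longrightarrow> \<not> e (idx n x)"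
  by (simp add: epsv_idx split: if_splits)

lemma ev_of_idx: "epsv n e x = (if e (idx n x) then 1 else 0)"
  by (simp add: epsv_idx)

definition Iv :: "nat \<Rightarrow> nat \<Rightarrow> (int \<Rightarrow> bool) \<Rightarrow> real" where
  "Iv n v e = (if Wv n e = real v then 1 else 0)"

lemma Iv01: "Iv n v e = 0 \<or> Iv n v e = 1" by (simp add: Iv_def)

lemma W_updx:
  assumes n: "n \<ge> 3" and ex: "epsv n e x = 0"
  shows "Wv n (e(idx n x := True)) = Wv n e + epsv n e (x - 1) + epsv n e (x + 1)"
proof -
  have m: "idx n x \<in> {1..int n}" using idx_in n by simp
  have "Wv n (e(idx n x := True)) = Wv n e + epsv n e (idx n x + (-1)) + epsv n e (idx n x + 1)"
    using W_upd[where e=e and m="idx n x", OF n m ev_false[OF ex]] by simp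
  then show ?thesis by (simp only: epsv_idx_add) simp
qed

lemma togglex:
  assumes n: "n \<ge> 3" and p: "0 < p" "p < 1"
  shows "EE n p (\<lambda>e. g e * epsv n e x) = p / (1 - p) * EE n p (\<lambda>e. g (e(idx n x := True)) * (1 - epsv n e x))"
proof -
  have m: "idx n x \<in> {1..int n}" using idx_in n by simp
  show ?thesis using toggle[OF m p, of g] by (simp add: epsv_idx0)
qed

lemma idx_ne: "a \<noteq> b \<Longrightarrow> \<bar>a - b\<bar> < int n \<Longrightarrow> idx n (x + a) \<noteq> idx n (x + b)"
  by (rule idx_neq) auto

lemma ev_per: "epsv n e (i + int n + a) = epsv n e (i + a)"
  using epsv_period[of n e "i + a"] by (simp add: algebra_simps)

lemma EE_sum_mult: "EE n p (\<lambda>e. (\<Sum>i\<in>{1..int n}. f i e) * h e) = (\<Sum>i\<in>{1..int n}. EE n p (\<lambda>e. f i e * h e))"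
  by (subst EE_sum[symmetric]) (simp_all add: sum_distrib_right)

context
  fixes n :: nat and p :: real
  assumes n3: "n \<ge> 3" and p0: "0 < p" and p1: "p < 1/2"
begin

lemma np: "n > 0" using n3 by simp

lemma shift1: "(\<Sum>i\<in>{1..int n}. f (i + a)) = (\<Sum>i\<in>{1..int n}. f i)" if "\<And>i. f (i + int n) = f i" for f :: "int \<Rightarrow> real"
  by (rule sum_shift[where f=f and n=n, OF that np])

lemma L3:
  shows "real n / 3 * EE n p (Iv n v) - real v * EE n p (Iv n v)
          \<le> EE n p (\<lambda>e. (\<Sum>i\<in>{1..int n}. (1 - epsv n e i) * (1 - epsv n e (i + 1))) * Iv n v e)"
proof -
  define K where "K e = (\<Sum>i\<in>{1..int n}. epsv n e i)" for e
  define D where "D e = (\<Sum>i\<in>{1..int n}. (1 - epsv n e i) * (1 - epsv n e (i + 1)))" for e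
  define iso where "iso i e = (1 - epsv n e (i - 1)) * epsv n e i * (1 - epsv n e (i + 1))" for i e
  define N3 where "N3 i e = (1 - epsv n e (i - 1)) * (1 - epsv n e i) * (1 - epsv n e (i + 1))" for i e
  have Kshift: "(\<Sum>i\<in>{1..int n}. epsv n e (i + 1)) = K e" for e
    unfolding K_def by (rule shift1[of "epsv n e"]) (rule epsv_period)
  have Wshift: "(\<Sum>i\<in>{1..int n}. Xv n e (i + -1)) = Wv n e" for e
    unfolding Wv_def by (rule shift1) (simp add: Xv_def ev_per epsv_period)
  have Deq: "D e = real n - 2 * K e + Wv n e" for e
  proof -
    have "D e = (\<Sum>i\<in>{1..int n}. 1 - epsv n e i - epsv n e (i + 1) + Xv n e i)"
      unfolding D_def Xv_def by (rule sum.cong) (auto simp: algebra_simps)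
    also have "\<dots> = real n - K e - K e + Wv n e"
      unfolding sum.distrib sum_subtractf Kshift K_def Wv_def by simp
    finally show ?thesis by simp
  qed
  have Kiso: "K e - (\<Sum>i\<in>{1..int n}. iso i e) \<le> 2 * Wv n e" for e
  proof -
    have "K e - (\<Sum>i\<in>{1..int n}. iso i e) = (\<Sum>i\<in>{1..int n}. epsv n e i - iso i e)"
      unfolding K_def by (simp add: sum_subtractf)
    also have "\<dots> \<le> (\<Sum>i\<in>{1..int n}. Xv n e (i + -1) + Xv n e i)"
    proof (rule sum_mono)
      fix i
      show "epsv n e i - iso i e \<le> Xv n e (i + -1) + Xv n e i"
        unfolding iso_def Xv_def
        using epsv01[of n e "i - 1"] epsv01[of n e i] epsv01[of n e "i + 1"] by auto
    qed
    also have "\<dots> = 2 * Wv n e" unfolding sum.distrib Wshift by (simp add: Wv_def)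
    finally show ?thesis .
  qed
  have tog: "EE n p (\<lambda>e. iso i e * Iv n v e) = p / (1 - p) * EE n p (\<lambda>e. N3 i e * Iv n v e)" for i
  proof -
    have "EE n p (\<lambda>e. iso i e * Iv n v e) = EE n p (\<lambda>e. ((1 - epsv n e (i - 1)) * (1 - epsv n e (i + 1)) * Iv n v e) * epsv n e i)"
      unfolding iso_def by (simp add: algebra_simps)
    also have "\<dots> = p / (1 - p) * EE n p (\<lambda>e. ((1 - epsv n (e(idx n i := True)) (i - 1)) * (1 - epsv n (e(idx n i := True)) (i + 1)) * Iv n v (e(idx n i := True))) * (1 - epsv n e i))"
      by (rule togglex[OF n3]) (use p0 p1 in auto)
    also have "EE n p (\<lambda>e. ((1 - epsv n (e(idx n i := True)) (i - 1)) * (1 - epsv n (e(idx n i := True)) (i + 1)) * Iv n v (e(idx n i := True))) * (1 - epsv n e i))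
        = EE n p (\<lambda>e. N3 i e * Iv n v e)"
    proof (rule EE_cong)
      fix e
      have ne1: "idx n (i - 1) \<noteq> idx n i" using idx_ne[of "-1" 0 n i] n3 by simp
      have ne2: "idx n (i + 1) \<noteq> idx n i" using idx_ne[of 1 0 n i] n3 by simp
      show "((1 - epsv n (e(idx n i := True)) (i - 1)) * (1 - epsv n (e(idx n i := True)) (i + 1)) * Iv n v (e(idx n i := True))) * (1 - epsv n e i)
        = N3 i e * Iv n v e"
      proof (cases "epsv n e i = 0")
        case True
        show ?thesis
          unfolding N3_def ev_upd_other[OF ne1] ev_upd_other[OF ne2] Iv_def W_updx[OF n3 True]
          using epsv01[of n e "i - 1"] epsv01[of n e "i + 1"] True by auto
      next
        case False
        then have "epsv n e i = 1" using epsv01[of n e i] by auto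
        then show ?thesis unfolding N3_def by simp
      qed
    qed
    finally show ?thesis .
  qed
  have pp: "p / (1 - p) \<le> 1" using p0 p1 by (simp add: field_simps)
  have "EE n p (\<lambda>e. K e * Iv n v e) - 2 * real v * EE n p (Iv n v) = EE n p (\<lambda>e. (K e - 2 * Wv n e) * Iv n v e)"
    by (subst EE_cmult[symmetric], subst EE_diff[symmetric]) (rule EE_cong, auto simp: Iv_def algebra_simps)
  also have "\<dots> \<le> EE n p (\<lambda>e. (\<Sum>i\<in>{1..int n}. iso i e) * Iv n v e)"
  proof (rule EE_mono)
    fix e show "(K e - 2 * Wv n e) * Iv n v e \<le> (\<Sum>i\<in>{1..int n}. iso i e) * Iv n v e"
      using Kiso[of e] by (auto simp: Iv_def)
  qed
  also have "\<dots> = (\<Sum>i\<in>{1..int n}. p / (1 - p) * EE n p (\<lambda>e. N3 i e * Iv n v e))"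
    unfolding EE_sum_mult tog ..
  also have "\<dots> \<le> (\<Sum>i\<in>{1..int n}. EE n p (\<lambda>e. N3 i e * Iv n v e))"
  proof (rule sum_mono)
    fix i
    have nn: "0 \<le> EE n p (\<lambda>e. N3 i e * Iv n v e)"
      by (rule EE_nonneg) (auto simp: N3_def Iv_def epsv_idx)
    then show "p / (1 - p) * EE n p (\<lambda>e. N3 i e * Iv n v e) \<le> EE n p (\<lambda>e. N3 i e * Iv n v e)"
      using mult_right_mono[OF pp nn] by simp
  qed
  also have "\<dots> = EE n p (\<lambda>e. (\<Sum>i\<in>{1..int n}. N3 i e) * Iv n v e)"
    unfolding EE_sum_mult ..
  also have "\<dots> \<le> EE n p (\<lambda>e. D e * Iv n v e)"
  proof (rule EE_mono)
    fix e
    have "(\<Sum>i\<in>{1..int n}. N3 i e) \<le> D e"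
      unfolding D_def N3_def
    proof (rule sum_mono)
      fix i show "(1 - epsv n e (i - 1)) * (1 - epsv n e i) * (1 - epsv n e (i + 1)) \<le> (1 - epsv n e i) * (1 - epsv n e (i + 1))"
        using epsv01[of n e "i - 1"] epsv01[of n e i] epsv01[of n e "i + 1"] by auto
    qed
    then show "(\<Sum>i\<in>{1..int n}. N3 i e) * Iv n v e \<le> D e * Iv n v e" by (auto simp: Iv_def)
  qed
  finally have A: "EE n p (\<lambda>e. K e * Iv n v e) - 2 * real v * EE n p (Iv n v) \<le> EE n p (\<lambda>e. D e * Iv n v e)" .
  have B: "EE n p (\<lambda>e. D e * Iv n v e) = real n * EE n p (Iv n v) - 2 * EE n p (\<lambda>e. K e * Iv n v e) + real v * EE n p (Iv n v)"
  proof -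
    have "EE n p (\<lambda>e. D e * Iv n v e) = EE n p (\<lambda>e. real n * Iv n v e - 2 * (K e * Iv n v e) + real v * Iv n v e)"
      by (rule EE_cong) (auto simp: Deq Iv_def algebra_simps)
    then show ?thesis by (simp only: EE_add EE_diff EE_cmult)
  qed
  from A B show ?thesis unfolding D_def by (simp add: algebra_simps)
qed

end

lemma tog_rev:
  assumes n: "n \<ge> 3" and p: "0 < p" "p < 1"
    and eq: "\<And>e. e \<in> SS n \<Longrightarrow> f e = g (e(idx n x := True)) * (1 - epsv n e x)"
  shows "EE n p f = (1 - p) / p * EE n p (\<lambda>e. g e * epsv n e x)"
proof -
  have "EE n p (\<lambda>e. g e * epsv n e x) = p / (1 - p) * EE n p f"
    using togglex[OF n p, of g x] EE_cong[of n f "\<lambda>e. g (e(idx n x := True)) * (1 - epsv n e x)" p] eq by simp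
  then show ?thesis using p by (simp add: field_simps)
qed

context
  fixes n :: nat and p :: real
  assumes n3: "n \<ge> 3" and p0: "0 < p" and p1: "p < 1/2"
begin

lemma np': "n > 0" using n3 by simp
lemma p01: "0 < p" "p < 1" using p0 p1 by auto

lemma shift2: "(\<Sum>i\<in>{1..int n}. f (i + a)) = (\<Sum>i\<in>{1..int n}. f i)" if "\<And>i. f (i + int n) = f i" for f :: "int \<Rightarrow> real"
  by (rule sum_shift[where f=f and n=n, OF that np'])

lemma ne: "a \<noteq> b \<Longrightarrow> \<bar>a - b\<bar> \<le> 2 \<Longrightarrow> idx n (x + a) \<noteq> idx n (x + b)"
  by (rule idx_ne) (use n3 in auto)

lemma EE_W: "EE n p (\<lambda>e. (\<Sum>j\<in>{1..int n}. Xv n e (j + a)) * Iv n w e) = real w * EE n p (Iv n w)"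
proof -
  have "(\<Sum>j\<in>{1..int n}. Xv n e (j + a)) = Wv n e" for e
    unfolding Wv_def by (rule shift2) (simp add: Xv_def ev_per epsv_period)
  then show ?thesis by (subst EE_cmult[symmetric]) (rule EE_cong, simp add: Iv_def)
qed

lemma R2piece:
  "EE n p (\<lambda>e. epsv n e (j - 1) * (1 - epsv n e j) * (1 - epsv n e (j + 1)) * Iv n v e)
   \<le> (1 - p) / p * EE n p (\<lambda>e. Xv n e (j + -1) * Iv n (Suc v) e)"
proof -
  let ?g = "\<lambda>e. epsv n e (j - 1) * (1 - epsv n e (j + 1)) * Iv n (Suc v) e"
  have "EE n p (\<lambda>e. epsv n e (j - 1) * (1 - epsv n e j) * (1 - epsv n e (j + 1)) * Iv n v e)
      = (1 - p) / p * EE n p (\<lambda>e. ?g e * epsv n e j)"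
  proof (rule tog_rev[OF n3 p01])
    fix e
    have ne1: "idx n (j - 1) \<noteq> idx n j" using ne[of "-1" 0 j] by simp
    have ne2: "idx n (j + 1) \<noteq> idx n j" using ne[of 1 0 j] by simp
    show "epsv n e (j - 1) * (1 - epsv n e j) * (1 - epsv n e (j + 1)) * Iv n v e = ?g (e(idx n j := True)) * (1 - epsv n e j)"
    proof (cases "epsv n e j = 0")
      case True
      show ?thesis
        unfolding ev_upd_other[OF ne1] ev_upd_other[OF ne2] Iv_def W_updx[OF n3 True]
        using epsv01[of n e "j - 1"] epsv01[of n e "j + 1"] True by auto
    next
      case False
      then have "epsv n e j = 1" using epsv01[of n e j] by auto
      then show ?thesis by simp
    qed
  qed
  also have "\<dots> \<le> (1 - p) / p * EE n p (\<lambda>e. Xv n e (j + -1) * Iv n (Suc v) e)"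
  proof (rule mult_left_mono)
    show "EE n p (\<lambda>e. ?g e * epsv n e j) \<le> EE n p (\<lambda>e. Xv n e (j + -1) * Iv n (Suc v) e)"
    proof (rule EE_mono)
      fix e show "?g e * epsv n e j \<le> Xv n e (j + -1) * Iv n (Suc v) e"
        unfolding Xv_def Iv_def
        using epsv01[of n e "j - 1"] epsv01[of n e "j + 1"] epsv01[of n e j] by auto
    qed
  qed (use p01 in simp)
  finally show ?thesis .
qed

lemma L2piece:
  "EE n p (\<lambda>e. (1 - epsv n e (j - 1)) * (1 - epsv n e j) * epsv n e (j + 1) * Iv n v e)
   \<le> (1 - p) / p * EE n p (\<lambda>e. Xv n e (j + 0) * Iv n (Suc v) e)"
proof -
  let ?g = "\<lambda>e. (1 - epsv n e (j - 1)) * epsv n e (j + 1) * Iv n (Suc v) e"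
  have "EE n p (\<lambda>e. (1 - epsv n e (j - 1)) * (1 - epsv n e j) * epsv n e (j + 1) * Iv n v e)
      = (1 - p) / p * EE n p (\<lambda>e. ?g e * epsv n e j)"
  proof (rule tog_rev[OF n3 p01])
    fix e
    have ne1: "idx n (j - 1) \<noteq> idx n j" using ne[of "-1" 0 j] by simp
    have ne2: "idx n (j + 1) \<noteq> idx n j" using ne[of 1 0 j] by simp
    show "(1 - epsv n e (j - 1)) * (1 - epsv n e j) * epsv n e (j + 1) * Iv n v e = ?g (e(idx n j := True)) * (1 - epsv n e j)"
    proof (cases "epsv n e j = 0")
      case True
      show ?thesis
        unfolding ev_upd_other[OF ne1] ev_upd_other[OF ne2] Iv_def W_updx[OF n3 True]
        using epsv01[of n e "j - 1"] epsv01[of n e "j + 1"] True by auto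
    next
      case False
      then have "epsv n e j = 1" using epsv01[of n e j] by auto
      then show ?thesis by simp
    qed
  qed
  also have "\<dots> \<le> (1 - p) / p * EE n p (\<lambda>e. Xv n e (j + 0) * Iv n (Suc v) e)"
  proof (rule mult_left_mono)
    show "EE n p (\<lambda>e. ?g e * epsv n e j) \<le> EE n p (\<lambda>e. Xv n e (j + 0) * Iv n (Suc v) e)"
    proof (rule EE_mono)
      fix e show "?g e * epsv n e j \<le> Xv n e (j + 0) * Iv n (Suc v) e"
        unfolding Xv_def Iv_def
        using epsv01[of n e "j - 1"] epsv01[of n e "j + 1"] epsv01[of n e j] by auto
    qed
  qed (use p01 in simp)
  finally show ?thesis .
qed

lemma N4piece:
  "EE n p (\<lambda>e. (1 - epsv n e j) * (1 - epsv n e (j + 1)) * (1 - epsv n e (j + 2)) * (1 - epsv n e (j + 3)) * Iv n v e)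
   \<le> ((1 - p) / p) * ((1 - p) / p) * EE n p (\<lambda>e. Xv n e (j + 1) * Iv n (Suc v) e)"
proof -
  let ?g1 = "\<lambda>e. (1 - epsv n e j) * (1 - epsv n e (j + 1)) * (1 - epsv n e (j + 3)) * Iv n v e"
  let ?g2 = "\<lambda>e. (1 - epsv n e j) * (1 - epsv n e (j + 3)) * epsv n e (j + 2) * Iv n (Suc v) e"
  have a02: "idx n (j + 0) \<noteq> idx n (j + 2)" by (rule ne) auto
  have a12: "idx n (j + 1) \<noteq> idx n (j + 2)" by (rule ne) auto
  have a32: "idx n (j + 3) \<noteq> idx n (j + 2)" by (rule ne) auto
  have a01: "idx n (j + 0) \<noteq> idx n (j + 1)" by (rule ne) auto
  have a31: "idx n (j + 3) \<noteq> idx n (j + 1)" by (rule ne) auto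
  have a21: "idx n (j + 2) \<noteq> idx n (j + 1)" by (rule ne) auto
  have "EE n p (\<lambda>e. (1 - epsv n e j) * (1 - epsv n e (j + 1)) * (1 - epsv n e (j + 2)) * (1 - epsv n e (j + 3)) * Iv n v e)
      = (1 - p) / p * EE n p (\<lambda>e. ?g1 e * epsv n e (j + 2))"
  proof (rule tog_rev[OF n3 p01])
    fix e
    show "(1 - epsv n e j) * (1 - epsv n e (j + 1)) * (1 - epsv n e (j + 2)) * (1 - epsv n e (j + 3)) * Iv n v e
       = ?g1 (e(idx n (j + 2) := True)) * (1 - epsv n e (j + 2))"
    proof (cases "epsv n e (j + 2) = 0")
      case True
      have h: "j + 2 - 1 = j + 1" "j + 2 + 1 = j + 3" by simp_all
      have w: "Wv n (e(idx n (j + 2) := True)) = Wv n e + epsv n e (j + 1) + epsv n e (j + 3)"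
        using W_updx[OF n3 True] unfolding h .
      show ?thesis
        using ev_upd_other[OF a02[simplified], of e True] ev_upd_other[OF a12, of e True] ev_upd_other[OF a32, of e True]
        unfolding Iv_def w
        using epsv01[of n e j] epsv01[of n e "j + 1"] epsv01[of n e "j + 3"] True by auto
    next
      case False
      then have "epsv n e (j + 2) = 1" using epsv01[of n e "j + 2"] by auto
      then show ?thesis by simp
    qed
  qed
  also have "EE n p (\<lambda>e. ?g1 e * epsv n e (j + 2)) = (1 - p) / p * EE n p (\<lambda>e. ?g2 e * epsv n e (j + 1))"
  proof (rule tog_rev[OF n3 p01])
    fix e
    show "?g1 e * epsv n e (j + 2) = ?g2 (e(idx n (j + 1) := True)) * (1 - epsv n e (j + 1))"
    proof (cases "epsv n e (j + 1) = 0")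
      case True
      have w: "Wv n (e(idx n (j + 1) := True)) = Wv n e + epsv n e j + epsv n e (j + 2)"
        using W_updx[OF n3 True] by (simp add: add.assoc)
      show ?thesis
        using ev_upd_other[OF a01[simplified], of e True] ev_upd_other[OF a31, of e True] ev_upd_other[OF a21, of e True]
        unfolding Iv_def w
        using epsv01[of n e j] epsv01[of n e "j + 2"] epsv01[of n e "j + 3"] True by auto
    next
      case False
      then have "epsv n e (j + 1) = 1" using epsv01[of n e "j + 1"] by auto
      then show ?thesis by simp
    qed
  qed
  also have "(1 - p) / p * ((1 - p) / p * EE n p (\<lambda>e. ?g2 e * epsv n e (j + 1)))
     \<le> (1 - p) / p * ((1 - p) / p * EE n p (\<lambda>e. Xv n e (j + 1) * Iv n (Suc v) e))"
  proof (intro mult_left_mono)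
    show "EE n p (\<lambda>e. ?g2 e * epsv n e (j + 1)) \<le> EE n p (\<lambda>e. Xv n e (j + 1) * Iv n (Suc v) e)"
    proof (rule EE_mono)
      fix e show "?g2 e * epsv n e (j + 1) \<le> Xv n e (j + 1) * Iv n (Suc v) e"
        unfolding Xv_def Iv_def
        using epsv01[of n e j] epsv01[of n e "j + 1"] epsv01[of n e "j + 2"] epsv01[of n e "j + 3"]
        by (auto simp: add.assoc)
    qed
  qed (use p01 in simp_all)
  finally show ?thesis by (simp add: mult.assoc)
qed

lemma L2:
  "EE n p (\<lambda>e. (\<Sum>i\<in>{1..int n}. (1 - epsv n e i) * (1 - epsv n e (i + 1))) * Iv n v e)
   \<le> (3 * ((1 - p) / p) + ((1 - p) / p) * ((1 - p) / p)) * real (Suc v) * EE n p (Iv n (Suc v))"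
proof -
  define q where "q = (1 - p) / p"
  have q0: "q \<ge> 0" unfolding q_def using p01 by simp
  define R2 where "R2 j e = epsv n e (j - 1) * (1 - epsv n e j) * (1 - epsv n e (j + 1))" for j e
  define N4 where "N4 j e = (1 - epsv n e j) * (1 - epsv n e (j + 1)) * (1 - epsv n e (j + 2)) * (1 - epsv n e (j + 3))" for j e
  define L where "L c e = (1 - epsv n e (c - 1)) * (1 - epsv n e c) * epsv n e (c + 1)" for c e
  define I where "I = Iv n v"
  define I' where "I' = Iv n (Suc v)"
  have Lshift: "(\<Sum>j\<in>{1..int n}. L (j + a) e) = (\<Sum>j\<in>{1..int n}. L j e)" for a e
  proof (rule shift2[where f="\<lambda>c. L c e"])
    fix c
    have "epsv n e (c + int n - 1) = epsv n e (c - 1)" using epsv_period[of n e "c - 1"] by (simp add: algebra_simps)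
    then show "L (c + int n) e = L c e" by (simp add: L_def ev_per epsv_period)
  qed
  have pw: "(1 - epsv n e j) * (1 - epsv n e (j + 1)) \<le> R2 j e + N4 j e + L (j + 1) e + L (j + 2) e" for e j
  proof -
    have h: "j + 1 - 1 = j" "j + 1 + 1 = j + 2" "j + 2 - 1 = j + 1" "j + 2 + 1 = j + 3" by simp_all
    show ?thesis unfolding R2_def N4_def L_def h
      using epsv01[of n e "j - 1"] epsv01[of n e j] epsv01[of n e "j + 1"] epsv01[of n e "j + 2"] epsv01[of n e "j + 3"]
      by auto
  qed
  have "EE n p (\<lambda>e. (\<Sum>i\<in>{1..int n}. (1 - epsv n e i) * (1 - epsv n e (i + 1))) * I e)
      \<le> EE n p (\<lambda>e. (\<Sum>j\<in>{1..int n}. R2 j e) * I e + (\<Sum>j\<in>{1..int n}. N4 j e) * I e + 2 * ((\<Sum>j\<in>{1..int n}. L j e) * I e))"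
  proof (rule EE_mono)
    fix e
    have "(\<Sum>i\<in>{1..int n}. (1 - epsv n e i) * (1 - epsv n e (i + 1))) \<le> (\<Sum>j\<in>{1..int n}. R2 j e + N4 j e + L (j + 1) e + L (j + 2) e)"
      by (rule sum_mono) (rule pw)
    also have "\<dots> = (\<Sum>j\<in>{1..int n}. R2 j e) + (\<Sum>j\<in>{1..int n}. N4 j e) + 2 * (\<Sum>j\<in>{1..int n}. L j e)"
      by (simp add: sum.distrib Lshift)
    finally show "(\<Sum>i\<in>{1..int n}. (1 - epsv n e i) * (1 - epsv n e (i + 1))) * I e \<le> (\<Sum>j\<in>{1..int n}. R2 j e) * I e + (\<Sum>j\<in>{1..int n}. N4 j e) * I e + 2 * ((\<Sum>j\<in>{1..int n}. L j e) * I e)"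
      by (auto simp: I_def Iv_def algebra_simps)
  qed
  also have "\<dots> = (\<Sum>j\<in>{1..int n}. EE n p (\<lambda>e. R2 j e * I e)) + (\<Sum>j\<in>{1..int n}. EE n p (\<lambda>e. N4 j e * I e)) + 2 * (\<Sum>j\<in>{1..int n}. EE n p (\<lambda>e. L j e * I e))"
    by (simp only: EE_add EE_cmult EE_sum_mult)
  also have "\<dots> \<le> (\<Sum>j\<in>{1..int n}. q * EE n p (\<lambda>e. Xv n e (j + -1) * I' e)) + (\<Sum>j\<in>{1..int n}. q * q * EE n p (\<lambda>e. Xv n e (j + 1) * I' e)) + 2 * (\<Sum>j\<in>{1..int n}. q * EE n p (\<lambda>e. Xv n e (j + 0) * I' e))"
  proof -
    have 1: "EE n p (\<lambda>e. R2 j e * I e) \<le> q * EE n p (\<lambda>e. Xv n e (j + -1) * I' e)" for j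
      unfolding R2_def I_def I'_def q_def by (rule R2piece)
    have 2: "EE n p (\<lambda>e. N4 j e * I e) \<le> q * q * EE n p (\<lambda>e. Xv n e (j + 1) * I' e)" for j
      unfolding N4_def I_def I'_def q_def by (rule N4piece)
    have 3: "EE n p (\<lambda>e. L j e * I e) \<le> q * EE n p (\<lambda>e. Xv n e (j + 0) * I' e)" for j
      unfolding L_def I_def I'_def q_def by (rule L2piece)
    show ?thesis by (intro add_mono sum_mono mult_left_mono 1 2 3) simp
  qed
  also have "\<dots> = q * EE n p (\<lambda>e. (\<Sum>j\<in>{1..int n}. Xv n e (j + -1)) * I' e) + q * q * EE n p (\<lambda>e. (\<Sum>j\<in>{1..int n}. Xv n e (j + 1)) * I' e) + 2 * (q * EE n p (\<lambda>e. (\<Sum>j\<in>{1..int n}. Xv n e (j + 0)) * I' e))"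
    by (simp only: EE_sum_mult sum_distrib_left)
  also have "\<dots> = (3 * q + q * q) * real (Suc v) * EE n p I'"
    unfolding I'_def EE_W by (simp add: algebra_simps)
  finally show ?thesis unfolding q_def I_def I'_def .
qed

end

definition Pr :: "nat \<Rightarrow> (int \<Rightarrow> bool) \<Rightarrow> int \<Rightarrow> nat \<Rightarrow> real" where
  "Pr n e i d = (\<Prod>s\<in>{0..<d}. epsv n e (i + int s))"

lemma Pr_Suc: "Pr n e i (Suc d) = Pr n e i d * epsv n e (i + int d)"
  unfolding Pr_def by (simp add: prod.atLeastLessThan_Suc)

lemma Pr_nonneg: "Pr n e i d \<ge> 0"
  unfolding Pr_def by (intro prod_nonneg) (simp add: epsv_idx)


lemma Pr_2: "Pr n e i 2 = Xv n e i"
  unfolding Pr_def Xv_def by (simp add: numeral_2_eq_2 prod.atLeastLessThan_Suc)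

lemma Pr_3: "Pr n e i 3 = Xv n e i * Xv n e (i + 1)"
proof -
  have "Pr n e i 3 = epsv n e i * epsv n e (i + 1) * epsv n e (i + 2)"
    unfolding Pr_def by (simp add: numeral_3_eq_3 prod.atLeastLessThan_Suc)
  moreover have "i + 1 + 1 = i + 2" by simp
  ultimately show ?thesis unfolding Xv_def
    using epsv01[of n e i] epsv01[of n e "i + 1"] epsv01[of n e "i + 2"] arg_cong[of "2 + i" "i + 2" "epsv n e"] by auto
qed

lemma Pr_factor: "Pr n e i d \<noteq> 0 \<Longrightarrow> s < d \<Longrightarrow> epsv n e (i + int s) = 1"
  unfolding Pr_def using epsv01[of n e "i + int s"] by auto

lemma telescope: "Pr n e i d - Pr n e i (d + k) = (\<Sum>t\<in>{d..<d + k}. Pr n e i t * (1 - epsv n e (i + int t)))"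
proof (induction k)
  case 0 then show ?case by simp
next
  case (Suc k)
  have "Pr n e i d - Pr n e i (d + Suc k) = (Pr n e i d - Pr n e i (d + k)) + Pr n e i (d + k) * (1 - epsv n e (i + int (d + k)))"
    by (simp add: Pr_Suc algebra_simps)
  also have "\<dots> = (\<Sum>t\<in>{d..<d + Suc k}. Pr n e i t * (1 - epsv n e (i + int t)))"
    using Suc by (simp add: sum.atLeastLessThan_Suc)
  finally show ?case .
qed

lemma Pr_full:
  assumes n: "n > 0" and pr: "Pr n e i n \<noteq> 0"
  shows "Wv n e = real n"
proof -
  have all: "epsv n e j = 1" for j
  proof -
    define s where "s = nat ((j - i) mod int n)"
    have s: "s < n" "int s = (j - i) mod int n" using n unfolding s_def by (auto simp: nat_less_iff)
    have "idx n (i + int s) = idx n j"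
    proof -
      have "(i + (j - i) mod int n - 1) mod int n = ((i - 1) + (j - i) mod int n) mod int n" by (simp add: algebra_simps)
      also have "\<dots> = ((i - 1) + (j - i)) mod int n" by (rule mod_add_right_eq)
      finally show ?thesis unfolding idx_def s(2) by simp
    qed
    then have "epsv n e j = epsv n e (i + int s)" by (simp add: epsv_idx)
    then show ?thesis using Pr_factor[OF pr s(1)] by simp
  qed
  show ?thesis unfolding Wv_def Xv_def all by simp
qed

context
  fixes n :: nat and p :: real
  assumes n3: "n \<ge> 3" and p0: "0 < p" and p1: "p < 1/2"
begin

lemma p01': "0 < p" "p < 1" using p0 p1 by auto

lemma L1:
  assumes w1: "1 \<le> w" and wn: "w < n"
  shows "EE n p (\<lambda>e. (\<Sum>i\<in>{1..int n}. Pr n e i 3) * Iv n w e) \<le> p / (1 - p) * (real (w - 1) * EE n p (Iv n (w - 1)))"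
proof -
  define I where "I = Iv n w"
  define I' where "I' = Iv n (w - 1)"
  define q where "q = p / (1 - p)"
  have q0: "q \<ge> 0" unfolding q_def using p01' by simp
  have n0: "n > 0" using n3 by simp
  have dec: "Pr n e i 3 * I e = (\<Sum>t\<in>{3..<n}. Pr n e i t * (1 - epsv n e (i + int t)) * I e)" for e i
  proof -
    have "Pr n e i 3 - Pr n e i (3 + (n - 3)) = (\<Sum>t\<in>{3..<3 + (n - 3)}. Pr n e i t * (1 - epsv n e (i + int t)))"
      by (rule telescope)
    then have t: "Pr n e i 3 = (\<Sum>t\<in>{3..<n}. Pr n e i t * (1 - epsv n e (i + int t))) + Pr n e i n"
      using n3 by simp
    have z: "Pr n e i n * I e = 0"
    proof (cases "Pr n e i n = 0")
      case False
      then have "Wv n e = real n" by (rule Pr_full[OF n0])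
      then show ?thesis using wn by (simp add: I_def Iv_def)
    qed simp
    show ?thesis unfolding t distrib_right sum_distrib_right z by simp
  qed
  have trm: "EE n p (\<lambda>e. Pr n e i t * (1 - epsv n e (i + int t)) * I e)
      \<le> q * EE n p (\<lambda>e. Pr n e i (t - 1) * (1 - epsv n e (i + int (t - 1))) * I' e)"
    if t: "t \<in> {3..<n}" for i t
  proof -
    define x where "x = i + int (t - 1)"
    define G where "G e = Pr n e i (t - 1) * (1 - epsv n e (i + int t)) * I e" for e
    have tS: "t = Suc (t - 1)" using t by auto
    have "EE n p (\<lambda>e. Pr n e i t * (1 - epsv n e (i + int t)) * I e) = EE n p (\<lambda>e. G e * epsv n e x)"
      by (rule EE_cong) (subst tS, simp add: Pr_Suc G_def x_def algebra_simps)
    also have "\<dots> = q * EE n p (\<lambda>e. G (e(idx n x := True)) * (1 - epsv n e x))"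
      unfolding q_def by (rule togglex[OF n3 p01'])
    also have "EE n p (\<lambda>e. G (e(idx n x := True)) * (1 - epsv n e x))
        = EE n p (\<lambda>e. Pr n e i (t - 1) * (1 - epsv n e (i + int t)) * (1 - epsv n e x) * I' e)"
    proof (rule EE_cong)
      fix e
      let ?e' = "e(idx n x := True)"
      have Pr_eq: "Pr n ?e' i (t - 1) = Pr n e i (t - 1)"
        unfolding Pr_def
      proof (rule prod.cong)
        fix s assume "s \<in> {0..<t - 1}"
        then have "idx n (i + int s) \<noteq> idx n (i + int (t - 1))" using t by (intro idx_ne) auto
        then show "epsv n ?e' (i + int s) = epsv n e (i + int s)" unfolding x_def by (rule ev_upd_other)
      qed simp
      have ne_t: "idx n (i + int t) \<noteq> idx n x" unfolding x_def using t n3 by (intro idx_ne) auto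
      show "G ?e' * (1 - epsv n e x) = Pr n e i (t - 1) * (1 - epsv n e (i + int t)) * (1 - epsv n e x) * I' e"
      proof (cases "Pr n e i (t - 1) = 0 \<or> epsv n e (i + int t) = 1 \<or> epsv n e x = 1")
        case True
        then show ?thesis unfolding G_def Pr_eq ev_upd_other[OF ne_t] by auto
      next
        case False
        then have pr: "Pr n e i (t - 1) \<noteq> 0" and et: "epsv n e (i + int t) = 0" and ex: "epsv n e x = 0"
          using epsv01[of n e "i + int t"] epsv01[of n e x] by auto
        have "epsv n e (i + int (t - 2)) = 1" using Pr_factor[OF pr, of "t - 2"] t by auto
        moreover have "x - 1 = i + int (t - 2)" "x + 1 = i + int t" unfolding x_def using t by auto
        ultimately have W': "Wv n ?e' = Wv n e + 1"
          using W_updx[OF n3 ex] et by simp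
        have "I ?e' = I' e" unfolding I_def I'_def Iv_def W' using w1 by auto
        then show ?thesis unfolding G_def Pr_eq ev_upd_other[OF ne_t] by simp
      qed
    qed
    also have "\<dots> \<le> EE n p (\<lambda>e. Pr n e i (t - 1) * (1 - epsv n e (i + int (t - 1))) * I' e)"
    proof (rule EE_mono)
      fix e
      have "0 \<le> Pr n e i (t - 1) * (1 - epsv n e x) * I' e"
        using Pr_nonneg[of n e i "t - 1"] epsv01[of n e x] by (auto simp: I'_def Iv_def)
      then show "Pr n e i (t - 1) * (1 - epsv n e (i + int t)) * (1 - epsv n e x) * I' e \<le> Pr n e i (t - 1) * (1 - epsv n e (i + int (t - 1))) * I' e"
        unfolding x_def using epsv01[of n e "i + int t"]
        by (auto simp: algebra_simps)
    qed
    finally show ?thesis using q0 by (simp add: mult_left_mono)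
  qed
  have inner: "(\<Sum>t\<in>{3..<n}. Pr n e i (t - 1) * (1 - epsv n e (i + int (t - 1)))) \<le> Xv n e i" for e i
  proof -
    have "(\<Sum>t\<in>{3..<n}. Pr n e i (t - 1) * (1 - epsv n e (i + int (t - 1))))
        = (\<Sum>t\<in>{2 + 1..<(n - 1) + 1}. Pr n e i (t - 1) * (1 - epsv n e (i + int (t - 1))))"
      using n3 by simp
    also have "\<dots> = (\<Sum>t\<in>{2..<n - 1}. Pr n e i (t + 1 - 1) * (1 - epsv n e (i + int (t + 1 - 1))))"
      by (rule sum.shift_bounds_nat_ivl)
    also have "\<dots> = (\<Sum>t\<in>{2..<2 + (n - 3)}. Pr n e i t * (1 - epsv n e (i + int t)))"
    proof -
      have "2 + (n - 3) = n - 1" using n3 by simp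
      then show ?thesis by simp
    qed
    also have "\<dots> = Pr n e i 2 - Pr n e i (2 + (n - 3))" by (rule telescope[symmetric])
    also have "\<dots> \<le> Xv n e i" using Pr_nonneg[of n e i "2 + (n - 3)"] by (simp add: Pr_2)
    finally show ?thesis .
  qed
  have "EE n p (\<lambda>e. (\<Sum>i\<in>{1..int n}. Pr n e i 3) * I e) = (\<Sum>i\<in>{1..int n}. \<Sum>t\<in>{3..<n}. EE n p (\<lambda>e. Pr n e i t * (1 - epsv n e (i + int t)) * I e))"
    by (simp only: EE_sum_mult dec EE_sum[symmetric, OF finite_atLeastLessThan])
  also have "\<dots> \<le> (\<Sum>i\<in>{1..int n}. \<Sum>t\<in>{3..<n}. q * EE n p (\<lambda>e. Pr n e i (t - 1) * (1 - epsv n e (i + int (t - 1))) * I' e))"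
    by (intro sum_mono trm) auto
  also have "\<dots> = q * EE n p (\<lambda>e. (\<Sum>i\<in>{1..int n}. \<Sum>t\<in>{3..<n}. Pr n e i (t - 1) * (1 - epsv n e (i + int (t - 1)))) * I' e)"
    by (simp add: EE_sum sum_distrib_left sum_distrib_right)
  also have "\<dots> \<le> q * EE n p (\<lambda>e. Wv n e * I' e)"
  proof (intro mult_left_mono q0 EE_mono)
    fix e
    have "(\<Sum>i\<in>{1..int n}. \<Sum>t\<in>{3..<n}. Pr n e i (t - 1) * (1 - epsv n e (i + int (t - 1)))) \<le> Wv n e"
      unfolding Wv_def by (intro sum_mono inner)
    then show "(\<Sum>i\<in>{1..int n}. \<Sum>t\<in>{3..<n}. Pr n e i (t - 1) * (1 - epsv n e (i + int (t - 1)))) * I' e \<le> Wv n e * I' e"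
      by (auto simp: I'_def Iv_def)
  qed
  also have "EE n p (\<lambda>e. Wv n e * I' e) = real (w - 1) * EE n p I'"
    by (subst EE_cmult[symmetric]) (rule EE_cong, simp add: I'_def Iv_def)
  finally show ?thesis unfolding q_def I_def I'_def .
qed

end

lemma prob_EE: "measure_pmf.prob (eps_pmf n p) {e. Wv n e = real w} = EE n p (Iv n w)"
proof -
  have "measure_pmf.prob (eps_pmf n p) {e. Wv n e = real w} = measure_pmf.expectation (eps_pmf n p) (indicator {e. Wv n e = real w})"
    by simp
  also have "\<dots> = EE n p (Iv n w)" unfolding expectation_EE
    by (rule EE_cong) (simp add: Iv_def indicator_def)
  finally show ?thesis .
qed

lemma cond_EE:
  assumes pos: "measure_pmf.prob (eps_pmf n p) {e. Wv n e = real w} > 0"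
  shows "measure_pmf.expectation (cond_pmf (eps_pmf n p) {e. Wv n e = real w}) f = EE n p (\<lambda>e. f e * Iv n w e) / EE n p (Iv n w)"
proof -
  let ?A = "{e. Wv n e = real w}"
  have ne: "set_pmf (eps_pmf n p) \<inter> ?A \<noteq> {}" using pos measure_pmf_zero_iff[of "eps_pmf n p" ?A] by auto
  have sub: "set_pmf (cond_pmf (eps_pmf n p) ?A) \<subseteq> SS n" using set_cond_pmf[OF ne] set_eps_pmf by auto
  have "measure_pmf.expectation (cond_pmf (eps_pmf n p) ?A) f = (\<Sum>e\<in>SS n. f e * pmf (cond_pmf (eps_pmf n p) ?A) e)"
    by (rule integral_measure_pmf_real) (use finite_SS sub in auto)
  also have "\<dots> = (\<Sum>e\<in>SS n. pmf (eps_pmf n p) e * (f e * Iv n w e) / EE n p (Iv n w))"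
    by (rule sum.cong) (auto simp: pmf_cond[OF ne] prob_EE Iv_def)
  also have "\<dots> = EE n p (\<lambda>e. f e * Iv n w e) / EE n p (Iv n w)"
    unfolding EE_def by (simp add: sum_divide_distrib)
  finally show ?thesis .
qed

theorem mainTheorem6:
  "\<exists>c::real. \<exists>C::real. c > 0 \<and> C > 0 \<and>
     (\<forall>(n::nat) (p::real) (w::nat).
        n > 10 \<longrightarrow> 0 < p \<longrightarrow> p < 1/2 \<longrightarrow> 0 < w \<longrightarrow> real w \<le> c * real n * p \<longrightarrow>
        measure_pmf.prob (eps_pmf n p) {e. Wv n e = real w} > 0 \<longrightarrow>
        (\<Sum>i\<in>{1..int n}. \<Sum>j\<in>{i - 1, i + 1}.
            measure_pmf.expectation (cond_pmf (eps_pmf n p) {e. Wv n e = real w})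
              (\<lambda>e. Xv n e i * Xv n e j))
        \<le> C / (real n * p) * (real w)^2)"
proof (intro exI conjI allI impI)
  show "(1/10::real) > 0" by simp
  show "(64::real) > 0" by simp
  fix n :: nat and p :: real and w :: nat
  assume n10: "n > 10" and p0: "0 < p" and p1: "p < 1/2" and w0: "0 < w"
    and wc: "real w \<le> 1/10 * real n * p"
    and pos: "measure_pmf.prob (eps_pmf n p) {e. Wv n e = real w} > 0"
  have n3: "n \<ge> 3" using n10 by simp
  have np0: "n > 0" using n10 by simp
  define v where "v = w - 1"
  have wv: "w = Suc v" using w0 unfolding v_def by simp
  have w_le: "real w \<le> real n / 20"
  proof -
    have "1/10 * real n * p \<le> 1/10 * real n * (1/2)" using p1 by (intro mult_left_mono) auto
    then show ?thesis using wc by linarith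
  qed
  have wn: "w < n" using w_le n10 by simp
  define a where "a = EE n p (Iv n v)"
  define b where "b = EE n p (Iv n w)"
  define t where "t = EE n p (\<lambda>e. (\<Sum>i\<in>{1..int n}. Pr n e i 3) * Iv n w e)"
  have b0: "b > 0" using pos unfolding b_def prob_EE .
  have a0: "a \<ge> 0" unfolding a_def by (rule EE_nonneg) (simp add: Iv_def)
  have Xper: "Xv n e (i + int n) = Xv n e i" for e i
    unfolding Xv_def using ev_per[of n e i 0] ev_per[of n e i 1] by simp
  have lhs_pt: "(\<Sum>i\<in>{1..int n}. \<Sum>j\<in>{i - 1, i + 1}. Xv n e i * Xv n e j) = 2 * (\<Sum>i\<in>{1..int n}. Pr n e i 3)" for e
  proof -
    have "(\<Sum>i\<in>{1..int n}. \<Sum>j\<in>{i - 1, i + 1}. Xv n e i * Xv n e j)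
        = (\<Sum>i\<in>{1..int n}. Xv n e ((i + -1) + 1) * Xv n e (i + -1)) + (\<Sum>i\<in>{1..int n}. Xv n e i * Xv n e (i + 1))"
      by (simp add: sum.distrib)
    also have "(\<Sum>i\<in>{1..int n}. Xv n e ((i + -1) + 1) * Xv n e (i + -1)) = (\<Sum>i\<in>{1..int n}. Xv n e (i + 1) * Xv n e i)"
    proof (rule sum_shift[where f = "\<lambda>k. Xv n e (k + 1) * Xv n e k", OF _ np0])
      fix k
      have "Xv n e (k + int n + 1) = Xv n e (k + 1)" using Xper[of e "k + 1"] by (simp add: algebra_simps)
      then show "Xv n e (k + int n + 1) * Xv n e (k + int n) = Xv n e (k + 1) * Xv n e k" using Xper[of e k] by simp
    qed
    finally show ?thesis by (simp add: Pr_3 mult.commute)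
  qed
  have "(\<Sum>i\<in>{1..int n}. \<Sum>j\<in>{i - 1, i + 1}.
            measure_pmf.expectation (cond_pmf (eps_pmf n p) {e. Wv n e = real w}) (\<lambda>e. Xv n e i * Xv n e j))
      = (\<Sum>i\<in>{1..int n}. \<Sum>j\<in>{i - 1, i + 1}. EE n p (\<lambda>e. Xv n e i * Xv n e j * Iv n w e) / b)"
    unfolding cond_EE[OF pos] b_def ..
  also have "\<dots> = EE n p (\<lambda>e. (\<Sum>i\<in>{1..int n}. \<Sum>j\<in>{i - 1, i + 1}. Xv n e i * Xv n e j) * Iv n w e) / b"
    by (simp add: EE_sum sum_distrib_right sum_divide_distrib distrib_right EE_add add_divide_distrib)
  also have "\<dots> = 2 * t / b"
    unfolding lhs_pt t_def by (simp add: EE_cmult[symmetric] mult.assoc)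
  finally have lhs: "(\<Sum>i\<in>{1..int n}. \<Sum>j\<in>{i - 1, i + 1}.
            measure_pmf.expectation (cond_pmf (eps_pmf n p) {e. Wv n e = real w}) (\<lambda>e. Xv n e i * Xv n e j)) = 2 * t / b" .
  have h1: "t \<le> p / (1 - p) * (real v * a)"
    using L1[OF n3 p0 p1, of w] w0 wn unfolding t_def a_def v_def by simp
  have h3: "real n / 3 * a - real v * a \<le> EE n p (\<lambda>e. (\<Sum>i\<in>{1..int n}. (1 - epsv n e i) * (1 - epsv n e (i + 1))) * Iv n v e)"
    using L3[OF n3 p0 p1, of v] unfolding a_def .
  have h2: "EE n p (\<lambda>e. (\<Sum>i\<in>{1..int n}. (1 - epsv n e i) * (1 - epsv n e (i + 1))) * Iv n v e)
      \<le> (3 * ((1 - p) / p) + ((1 - p) / p) * ((1 - p) / p)) * real w * b"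
    using L2[OF n3 p0 p1, of v] unfolding b_def wv .
  have qb: "3 * ((1 - p) / p) + ((1 - p) / p) * ((1 - p) / p) \<le> 4 / p^2"
  proof -
    have q1: "(1 - p) / p \<le> 1 / p" using p0 by (simp add: divide_right_mono)
    have q2: "1 / p \<le> 1 / p^2" using p0 p1 by (simp add: field_simps power2_eq_square)
    have q0: "0 \<le> (1 - p) / p" using p0 p1 by simp
    have "((1 - p) / p) * ((1 - p) / p) \<le> (1/p) * (1/p)" using q1 q0 p0 by (intro mult_mono) auto
    also have "\<dots> = 1 / p^2" by (simp add: power2_eq_square)
    finally have q3: "((1 - p) / p) * ((1 - p) / p) \<le> 1 / p^2" .
    have "4 / p^2 = 4 * (1 / p^2)" by simp
    then show ?thesis using q1 q2 q3 by linarith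
  qed
  have vn: "real n / 4 \<le> real n / 3 - real v" using w_le wv by simp
  have A: "real n / 4 * a \<le> 4 / p^2 * real w * b"
  proof -
    have "real n / 4 * a \<le> (real n / 3 - real v) * a" using vn a0 by (intro mult_right_mono) auto
    also have "\<dots> \<le> (3 * ((1 - p) / p) + ((1 - p) / p) * ((1 - p) / p)) * real w * b"
    proof -
      have "(real n / 3 - real v) * a = real n / 3 * a - real v * a" by (simp add: left_diff_distrib)
      then show ?thesis using h2 h3 by linarith
    qed
    also have "\<dots> \<le> 4 / p^2 * real w * b" using qb b0 by (intro mult_right_mono) auto
    finally show ?thesis .
  qed
  have a_le: "a \<le> 16 * real w * b / (real n * p^2)"
    using A np0 p0 by (simp add: field_simps)
  have t_le: "t \<le> 2 * p * real w * a"
  proof -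
    have "p / (1 - p) \<le> 2 * p" using p0 p1 by (simp add: field_simps)
    moreover have "real v \<le> real w" using wv by simp
    ultimately have "p / (1 - p) * (real v * a) \<le> 2 * p * (real w * a)"
      using a0 p0 p1 by (intro mult_mono) (auto intro: mult_right_mono)
    then show ?thesis using h1 by simp
  qed
  have "t \<le> 2 * p * real w * (16 * real w * b / (real n * p^2))"
    using t_le a_le p0 by (smt (verit) mult_left_mono of_nat_0_le_iff zero_le_mult_iff)
  also have "\<dots> = 32 * (real w)^2 * b / (real n * p)"
    using p0 np0 by (simp add: field_simps power2_eq_square)
  finally have "t \<le> 32 * (real w)^2 * b / (real n * p)" .
  then have "2 * t / b \<le> 64 / (real n * p) * (real w)^2"
    using b0 p0 np0 by (simp add: field_simps)
  then show "(\<Sum>i\<in>{1..int n}. \<Sum>j\<in>{i - 1, i + 1}.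
            measure_pmf.expectation (cond_pmf (eps_pmf n p) {e. Wv n e = real w}) (\<lambda>e. Xv n e i * Xv n e j))
        \<le> 64 / (real n * p) * (real w)^2"
    unfolding lhs .
qed

end
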